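(* If $S$ and $T$ are semigroups each containing an element of infinite order, then the direct product $S\times T$ contains uncountably many pairwise non-isomorphic subsemigroups.
   Context: An element $x$ of a semigroup has infinite order if the powers $x,x^2,x^3,\dots$ are pairwise distinct. $S\times T$ is the direct product with componentwise multiplication. *)

theory Defs
  imports Main "HOL-Library.Countable_Set"
begin

text \<open>Positive powers in a semigroup: spow x n = x to the power (n+1).\<close>
fun spow :: "'a::semigroup_mult \<Rightarrow> nat \<Rightarrow> 'a" where
  "spow x 0 = x"
| "spow x (Suc n) = spow x n * x"

definition infinite_order :: "'a::semigroup_mult \<Rightarrow> bool" where
  "infinite_order x \<longleftrightarrow> inj (spow x)"

definition prod_mult :: "('a::semigroup_mult \<times> 'b::semigroup_mult) \<Rightarrow> ('a \<times> 'b) \<Rightarrow> ('a \<times> 'b)" where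
  "prod_mult p q = (fst p * fst q, snd p * snd q)"

definition subsemigroup :: "('c \<Rightarrow> 'c \<Rightarrow> 'c) \<Rightarrow> 'c set \<Rightarrow> bool" where
  "subsemigroup m A \<longleftrightarrow> A \<noteq> {} \<and> (\<forall>x\<in>A. \<forall>y\<in>A. m x y \<in> A)"

definition semigroup_iso :: "('c \<Rightarrow> 'c \<Rightarrow> 'c) \<Rightarrow> 'c set \<Rightarrow> 'c set \<Rightarrow> bool" where
  "semigroup_iso m A B \<longleftrightarrow>
     (\<exists>f. bij_betw f A B \<and> (\<forall>x\<in>A. \<forall>y\<in>A. f (m x y) = m (f x) (f y)))"

end

theory Submission
  imports Defs
begin

definition padd :: "nat \<times> nat \<Rightarrow> nat \<times> nat \<Rightarrow> nat \<times> nat" where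
  "padd p q = (fst p + fst q, snd p + snd q)"

inductive_set gen :: "nat set \<Rightarrow> (nat \<times> nat) set" for I where
  g: "j \<in> I \<Longrightarrow> (j+2, (j+2)*(j+2)) \<in> gen I"
| h: "j \<in> I \<Longrightarrow> (j+3, (j+2)*(j+3)) \<in> gen I"
| add: "x \<in> gen I \<Longrightarrow> y \<in> gen I \<Longrightarrow> padd x y \<in> gen I"

fun pw :: "('c \<Rightarrow> 'c \<Rightarrow> 'c) \<Rightarrow> nat \<Rightarrow> 'c \<Rightarrow> 'c" where
  "pw m 0 x = x"
| "pw m (Suc n) x = m (pw m n x) x"

definition closed :: "('c \<Rightarrow> 'c \<Rightarrow> 'c) \<Rightarrow> 'c set \<Rightarrow> bool" where
  "closed m A \<longleftrightarrow> (\<forall>x\<in>A. \<forall>y\<in>A. m x y \<in> A)"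

definition atom :: "('c \<Rightarrow> 'c \<Rightarrow> 'c) \<Rightarrow> 'c set \<Rightarrow> 'c \<Rightarrow> bool" where
  "atom m A a \<longleftrightarrow> a \<in> A \<and> (\<forall>x\<in>A. \<forall>y\<in>A. m x y \<noteq> a)"

definition Q :: "nat \<Rightarrow> ('c \<Rightarrow> 'c \<Rightarrow> 'c) \<Rightarrow> 'c set \<Rightarrow> bool" where
  "Q k m A \<longleftrightarrow> (\<exists>a b. atom m A a \<and> atom m A b \<and> pw m (k+2) a = pw m (k+1) b)"

lemma pw_closed: "closed m A \<Longrightarrow> x \<in> A \<Longrightarrow> pw m n x \<in> A"
  by (induction n) (auto simp: closed_def)

lemma pw_hom:
  assumes "closed m1 A" "\<forall>x\<in>A. \<forall>y\<in>A. f (m1 x y) = m2 (f x) (f y)" "x \<in> A"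
  shows "f (pw m1 n x) = pw m2 n (f x)"
  using assms by (induction n) (auto simp: pw_closed)

lemma Q_transfer:
  assumes cl: "closed m1 A" and bij: "bij_betw f A B"
    and hom: "\<forall>x\<in>A. \<forall>y\<in>A. f (m1 x y) = m2 (f x) (f y)"
    and q: "Q k m1 A"
  shows "Q k m2 B"
proof -
  have atomf: "atom m2 B (f a)" if "atom m1 A a" for a
  proof -
    have aA: "a \<in> A" using that by (simp add: atom_def)
    have "m2 u v \<noteq> f a" if "u \<in> B" "v \<in> B" for u v
    proof
      assume eq: "m2 u v = f a"
      obtain u' where u': "u' \<in> A" "u = f u'" using \<open>u \<in> B\<close> bij by (auto simp: bij_betw_def)
      obtain v' where v': "v' \<in> A" "v = f v'" using \<open>v \<in> B\<close> bij by (auto simp: bij_betw_def)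
      have "f (m1 u' v') = f a" using eq hom u' v' by simp
      moreover have "m1 u' v' \<in> A" using cl u' v' by (simp add: closed_def)
      ultimately have "m1 u' v' = a" using bij aA by (auto simp: bij_betw_def inj_on_def)
      thus False using \<open>atom m1 A a\<close> u' v' by (auto simp: atom_def)
    qed
    moreover have "f a \<in> B" using aA bij by (auto simp: bij_betw_def)
    ultimately show ?thesis by (auto simp: atom_def)
  qed
  obtain a b where ab: "atom m1 A a" "atom m1 A b" "pw m1 (k+2) a = pw m1 (k+1) b"
    using q by (auto simp: Q_def)
  have "pw m2 (k+2) (f a) = pw m2 (k+1) (f b)"
    using pw_hom[OF cl hom] ab by (metis atom_def)
  thus ?thesis using atomf ab unfolding Q_def by blast
qed

lemma iso_sym:
  assumes cl: "closed m1 A" and bij: "bij_betw f A B"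
    and hom: "\<forall>x\<in>A. \<forall>y\<in>A. f (m1 x y) = m2 (f x) (f y)"
  shows "\<exists>g. bij_betw g B A \<and> (\<forall>x\<in>B. \<forall>y\<in>B. g (m2 x y) = m1 (g x) (g y))"
proof (intro exI conjI ballI)
  let ?g = "the_inv_into A f"
  show "bij_betw ?g B A" using bij by (rule bij_betw_the_inv_into)
  fix x y assume x: "x \<in> B" and y: "y \<in> B"
  have gx: "?g x \<in> A" "f (?g x) = x"
    using x bij by (auto simp: f_the_inv_into_f_bij_betw bij_betw_def the_inv_into_into)
  have gy: "?g y \<in> A" "f (?g y) = y"
    using y bij by (auto simp: f_the_inv_into_f_bij_betw bij_betw_def the_inv_into_into)
  have "m2 x y = f (m1 (?g x) (?g y))" using hom gx gy by metis
  moreover have "m1 (?g x) (?g y) \<in> A" using cl gx gy by (simp add: closed_def)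
  ultimately show "?g (m2 x y) = m1 (?g x) (?g y)"
    using bij by (simp add: the_inv_into_f_f bij_betw_def)
qed

lemma Q_iff:
  assumes cl: "closed m1 A" and bij: "bij_betw f A B"
    and hom: "\<forall>x\<in>A. \<forall>y\<in>A. f (m1 x y) = m2 (f x) (f y)"
  shows "Q k m1 A \<longleftrightarrow> Q k m2 B"
proof
  assume "Q k m1 A" thus "Q k m2 B" using Q_transfer[OF assms] by blast
next
  assume q: "Q k m2 B"
  have clB: "closed m2 B"
    unfolding closed_def
  proof (intro ballI)
    fix x y assume "x \<in> B" "y \<in> B"
    then obtain x' y' where "x' \<in> A" "y' \<in> A" "x = f x'" "y = f y'"
      using bij by (auto simp: bij_betw_def)
    thus "m2 x y \<in> B" using hom cl bij by (metis bij_betw_apply closed_def)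
  qed
  obtain g where "bij_betw g B A" "\<forall>x\<in>B. \<forall>y\<in>B. g (m2 x y) = m1 (g x) (g y)"
    using iso_sym[OF assms] by blast
  thus "Q k m1 A" using Q_transfer[OF clB _ _ q] by blast
qed

lemma gen_closed: "closed padd (gen I)"
  by (auto simp: closed_def intro: gen.add)

lemma pw_padd: "pw padd n x = ((n+1) * fst x, (n+1) * snd x)"
  by (induction n) (auto simp: padd_def)

lemma gen_bound: "x \<in> gen I \<Longrightarrow> 2 \<le> fst x \<and> 1 \<le> snd x \<and> snd x \<le> fst x * fst x"
proof (induction rule: gen.induct)
  case (add x y)
  obtain a b where x: "x = (a,b)" by fastforce
  obtain c d where y: "y = (c,d)" by fastforce
  have "b + d \<le> a*a + c*c" using add x y by (simp add: add_mono)
  also have "\<dots> \<le> (a+c)*(a+c)" by (simp add: algebra_simps)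
  finally show ?case using add x y by (simp add: padd_def)
qed (auto simp: algebra_simps)

lemma sum_bound:
  assumes "x \<in> gen I" "y \<in> gen I"
  shows "snd (padd x y) + 2 * fst (padd x y) \<le> fst (padd x y) * fst (padd x y) + 2"
proof -
  obtain a b where x: "x = (a,b)" by fastforce
  obtain c d where y: "y = (c,d)" by fastforce
  have h: "2 \<le> a" "b \<le> a*a" "2 \<le> c" "d \<le> c*c" using gen_bound assms x y by force+
  obtain a' where a': "a = a' + 1" using h by (metis add.commute le_add_diff_inverse2 le_trans one_le_numeral)
  obtain c' where c': "c = c' + 1" using h by (metis add.commute le_add_diff_inverse2 le_trans one_le_numeral)
  have "b + d + 2*(a+c) \<le> a*a + c*c + 2*(a+c)" using h by simp
  also have "\<dots> \<le> (a+c)*(a+c) + 2" unfolding a' c' by (simp add: algebra_simps)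
  finally show ?thesis using x y by (simp add: padd_def)
qed

lemma atom_g: "j \<in> I \<Longrightarrow> atom padd (gen I) (j+2, (j+2)*(j+2))"
  unfolding atom_def
proof (intro conjI ballI)
  assume "j \<in> I" thus "(j+2, (j+2)*(j+2)) \<in> gen I" by (rule gen.g)
  fix x y assume xy: "x \<in> gen I" "y \<in> gen I"
  show "padd x y \<noteq> (j+2, (j+2)*(j+2))"
  proof
    assume "padd x y = (j+2, (j+2)*(j+2))"
    with sum_bound[OF xy] have "(j+2)*(j+2) + 2*(j+2) \<le> (j+2)*(j+2) + 2" by simp
    thus False by simp
  qed
qed

lemma atom_h: "j \<in> I \<Longrightarrow> atom padd (gen I) (j+3, (j+2)*(j+3))"
  unfolding atom_def
proof (intro conjI ballI)
  assume "j \<in> I" thus "(j+3, (j+2)*(j+3)) \<in> gen I" by (rule gen.h)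
  fix x y assume xy: "x \<in> gen I" "y \<in> gen I"
  show "padd x y \<noteq> (j+3, (j+2)*(j+3))"
  proof
    assume "padd x y = (j+3, (j+2)*(j+3))"
    with sum_bound[OF xy] have "(j+2)*(j+3) + 2*(j+3) \<le> (j+3)*(j+3) + 2" by simp
    thus False by (simp add: algebra_simps)
  qed
qed

lemma atom_gen:
  assumes "atom padd (gen I) a"
  shows "\<exists>j\<in>I. a = (j+2, (j+2)*(j+2)) \<or> a = (j+3, (j+2)*(j+3))"
proof -
  have "a \<in> gen I" using assms by (simp add: atom_def)
  thus ?thesis
  proof cases
    case (add x y) thus ?thesis using assms by (auto simp: atom_def)
  qed auto
qed

lemma Q_gen: "Q k padd (gen I) \<longleftrightarrow> k \<in> I"
proof
  assume "k \<in> I"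
  moreover have "pw padd (k+2) (k+2, (k+2)*(k+2)) = pw padd (k+1) (k+3, (k+2)*(k+3))"
    unfolding pw_padd by (simp add: algebra_simps)
  ultimately show "Q k padd (gen I)" unfolding Q_def using atom_g atom_h by blast
next
  assume "Q k padd (gen I)"
  then obtain a b where ab: "atom padd (gen I) a" "atom padd (gen I) b"
    and eq: "pw padd (k+2) a = pw padd (k+1) b" by (auto simp: Q_def)
  obtain i where i: "i \<in> I" "a = (i+2, (i+2)*(i+2)) \<or> a = (i+3, (i+2)*(i+3))"
    using atom_gen[OF ab(1)] by blast
  obtain j where j: "j \<in> I" "b = (j+2, (j+2)*(j+2)) \<or> b = (j+3, (j+2)*(j+3))"
    using atom_gen[OF ab(2)] by blast
  obtain p where p: "a = (p, (i+2)*p)" "p = i+2 \<or> p = i+3" using i by (auto simp: mult.commute)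
  obtain q where q: "b = (q, (j+2)*q)" "q = j+2 \<or> q = j+3" using j by (auto simp: mult.commute)
  have e1: "(k+3)*p = (k+2)*q" and e2: "(k+3)*((i+2)*p) = (k+2)*((j+2)*q)"
  proof -
    have f: "fst (pw padd (k+2) a) = fst (pw padd (k+1) b)" "snd (pw padd (k+2) a) = snd (pw padd (k+1) b)"
      using eq by simp_all
    hence "(k+2+1) * fst a = (k+1+1) * fst b" "(k+2+1) * snd a = (k+1+1) * snd b"
      by (simp_all only: pw_padd fst_conv snd_conv)
    thus "(k+3)*p = (k+2)*q" "(k+3)*((i+2)*p) = (k+2)*((j+2)*q)" using p(1) q(1) by (auto simp: algebra_simps)
  qed
  have "(i+2)*((k+3)*p) = (k+3)*((i+2)*p)" by (simp only: mult.left_commute)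
  also have "\<dots> = (k+2)*((j+2)*q)" by (rule e2)
  also have "\<dots> = (j+2)*((k+2)*q)" by (simp only: mult.left_commute)
  also have "\<dots> = (j+2)*((k+3)*p)" by (simp only: e1)
  finally have "(i+2)*((k+3)*p) = (j+2)*((k+3)*p)" .
  moreover have "(k+3)*p \<noteq> 0" using p(2) by auto
  ultimately have ij: "i = j" by simp
  have "k = i" using p(2) q(2) e1 unfolding ij by (auto simp: algebra_simps)
  thus "k \<in> I" using i by simp
qed

lemma spow_add: "spow x a * spow x b = spow x (a + b + 1)"
  by (induction b) (simp_all add: mult.assoc[symmetric])

definition phi :: "'a::semigroup_mult \<Rightarrow> 'b::semigroup_mult \<Rightarrow> nat \<times> nat \<Rightarrow> 'a \<times> 'b" where
  "phi s t x = (spow s (fst x - 1), spow t (snd x - 1))"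

lemma phi_hom:
  "\<forall>x\<in>gen I. \<forall>y\<in>gen I. phi s t (padd x y) = prod_mult (phi s t x) (phi s t y)"
proof (intro ballI)
  fix x y assume xy: "x \<in> gen I" "y \<in> gen I"
  have b: "1 \<le> fst x" "1 \<le> snd x" "1 \<le> fst y" "1 \<le> snd y"
    using gen_bound[OF xy(1)] gen_bound[OF xy(2)] by auto
  have e1: "fst x + fst y - 1 = (fst x - 1) + (fst y - 1) + 1" using b by simp
  have e2: "snd x + snd y - 1 = (snd x - 1) + (snd y - 1) + 1" using b by simp
  show "phi s t (padd x y) = prod_mult (phi s t x) (phi s t y)"
    unfolding phi_def padd_def prod_mult_def by (simp only: fst_conv snd_conv e1 e2 spow_add)
qed

lemma phi_inj:
  assumes "infinite_order s" "infinite_order t"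
  shows "inj_on (phi s t) (gen I)"
proof (rule inj_onI)
  fix x y assume xy: "x \<in> gen I" "y \<in> gen I" and eq: "phi s t x = phi s t y"
  have b: "1 \<le> fst x" "1 \<le> snd x" "1 \<le> fst y" "1 \<le> snd y"
    using gen_bound[OF xy(1)] gen_bound[OF xy(2)] by auto
  have "fst x - 1 = fst y - 1" "snd x - 1 = snd y - 1"
    using eq assms by (auto simp: phi_def infinite_order_def inj_def)
  thus "x = y" using b by (simp add: prod_eq_iff, linarith)
qed

lemma phi_closed: "closed prod_mult (phi s t ` gen I)"
  unfolding closed_def
proof (intro ballI)
  fix u v assume "u \<in> phi s t ` gen I" "v \<in> phi s t ` gen I"
  then obtain x y where "x \<in> gen I" "y \<in> gen I" "u = phi s t x" "v = phi s t y" by blast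
  thus "prod_mult u v \<in> phi s t ` gen I"
    using phi_hom[of I s t] gen.add by (metis image_eqI)
qed

lemma iso_same:
  assumes "infinite_order s" "infinite_order t"
    and iso: "semigroup_iso prod_mult (phi s t ` gen I) (phi s t ` gen J)"
  shows "I = J"
proof -
  have bI: "bij_betw (phi s t) (gen I) (phi s t ` gen I)"
    using phi_inj[OF assms(1,2)] by (simp add: bij_betw_def)
  have bJ: "bij_betw (phi s t) (gen J) (phi s t ` gen J)"
    using phi_inj[OF assms(1,2)] by (simp add: bij_betw_def)
  obtain f where f: "bij_betw f (phi s t ` gen I) (phi s t ` gen J)"
    "\<forall>x\<in>phi s t ` gen I. \<forall>y\<in>phi s t ` gen I. f (prod_mult x y) = prod_mult (f x) (f y)"
    using iso by (auto simp: semigroup_iso_def)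
  have "k \<in> I \<longleftrightarrow> k \<in> J" for k
  proof -
    have "k \<in> I \<longleftrightarrow> Q k padd (gen I)" by (simp add: Q_gen)
    also have "\<dots> \<longleftrightarrow> Q k prod_mult (phi s t ` gen I)"
      by (rule Q_iff[OF gen_closed bI phi_hom])
    also have "\<dots> \<longleftrightarrow> Q k prod_mult (phi s t ` gen J)"
      by (rule Q_iff[OF phi_closed f(1) f(2)])
    also have "\<dots> \<longleftrightarrow> Q k padd (gen J)"
      by (rule Q_iff[OF gen_closed bJ phi_hom, symmetric])
    also have "\<dots> \<longleftrightarrow> k \<in> J" by (simp add: Q_gen)
    finally show ?thesis .
  qed
  thus ?thesis by blast
qed

definition idx :: "nat set \<Rightarrow> nat set" where
  "idx X = insert 0 (Suc ` X)"

lemma idx_inj: "idx X = idx Y \<Longrightarrow> X = Y"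
proof -
  assume "idx X = idx Y"
  hence "Suc k \<in> idx X \<longleftrightarrow> Suc k \<in> idx Y" for k by simp
  hence "k \<in> X \<longleftrightarrow> k \<in> Y" for k by (auto simp: idx_def)
  thus "X = Y" by blast
qed

lemma uncountable_nat_sets: "uncountable (UNIV :: nat set set)"
proof
  assume "countable (UNIV :: nat set set)"
  then obtain f :: "nat \<Rightarrow> nat set" where "range f = UNIV"
    by (metis uncountable_def UNIV_not_empty)
  then obtain n where "f n = {m. m \<notin> f m}" by (metis UNIV_I imageE)
  thus False by blast
qed

theorem corollaryC:
  fixes s :: "'a::semigroup_mult" and t :: "'b::semigroup_mult"
  assumes "infinite_order s" and "infinite_order t"
  shows "\<exists>\<F> :: ('a \<times> 'b) set set. uncountable \<F> \<and>
           (\<forall>A\<in>\<F>. subsemigroup prod_mult A) \<and>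
           (\<forall>A\<in>\<F>. \<forall>B\<in>\<F>. A \<noteq> B \<longrightarrow> \<not> semigroup_iso prod_mult A B)"
proof (intro exI conjI ballI impI)
  let ?F = "(\<lambda>X. phi s t ` gen (idx X)) ` (UNIV :: nat set set)"
  have inj: "inj (\<lambda>X. phi s t ` gen (idx X))"
  proof (rule injI)
    fix X Y assume eq: "phi s t ` gen (idx X) = phi s t ` gen (idx Y)"
    have "semigroup_iso prod_mult (phi s t ` gen (idx X)) (phi s t ` gen (idx Y))"
      unfolding semigroup_iso_def eq by (rule exI[of _ id]) simp
    thus "X = Y" using iso_same[OF assms] idx_inj by blast
  qed
  show "uncountable ?F"
  proof
    assume "countable ?F"
    hence "countable (UNIV :: nat set set)"
      using countable_image_inj_on inj by blast
    thus False using uncountable_nat_sets by blast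
  qed
  fix A assume "A \<in> ?F"
  then obtain X where A: "A = phi s t ` gen (idx X)" by blast
  have "(0+2, (0+2)*(0+2)) \<in> gen (idx X)" by (rule gen.g) (simp add: idx_def)
  hence "A \<noteq> {}" using A by blast
  thus "subsemigroup prod_mult A"
    using phi_closed[of s t "idx X"] A by (simp add: subsemigroup_def closed_def)
next
  fix A B assume "A \<in> (\<lambda>X. phi s t ` gen (idx X)) ` UNIV" "B \<in> (\<lambda>X. phi s t ` gen (idx X)) ` UNIV"
    and ne: "A \<noteq> B"
  then obtain X Y where A: "A = phi s t ` gen (idx X)" and B: "B = phi s t ` gen (idx Y)" by blast
  show "\<not> semigroup_iso prod_mult A B"
  proof
    assume "semigroup_iso prod_mult A B"
    hence "idx X = idx Y" using iso_same[OF assms] A B by blast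
    thus False using ne A B by simp
  qed
qed

end
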